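(* Let $f$ be a critically coalescing quadratic rational map with critical points $c_1,c_2$. Then $\mathrm{Deck}(f^2)\cong V_4$, and the three special pairs of $\mathrm{Deck}(f^2)$ are exactly $\mathcal{C}_f=\{c_1,c_2\}$, $f^{-1}(c_1)$ and $f^{-1}(c_2)$.
   Context: A quadratic rational map with critical values $v_1\neq v_2$ is critically coalescing if $f(v_1)=f(v_2)$. $\mathrm{Deck}(F)=\{\tau \text{ Möbius} : F\circ\tau=F\}$. For a group $G\cong V_4$ (Klein four-group) of Möbius transformations, each of its three non-identity elements is an involution with exactly two fixed points in $\hat{\mathbb{C}}$; these three pairs of fixed points (six points in total) are called the special pairs of $G$. *)

theory Defs
  imports "HOL-Computational_Algebra.Polynomial_Factorial" "HOL-Algebra.Elementary_Groups"
begin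

datatype riem = Fin complex | Infty

text \<open>Evaluation on the Riemann sphere of the rational function P/Q
  (intended for coprime P, Q, not both constant).\<close>
fun rat_eval :: "complex poly \<Rightarrow> complex poly \<Rightarrow> riem \<Rightarrow> riem" where
  "rat_eval P Q (Fin z) =
     (if poly Q z = 0 then Infty else Fin (poly P z / poly Q z))"
| "rat_eval P Q Infty =
     (if degree P > degree Q then Infty
      else if degree P = degree Q then Fin (lead_coeff P / lead_coeff Q)
      else Fin 0)"

definition rational_map_deg :: "nat \<Rightarrow> (riem \<Rightarrow> riem) \<Rightarrow> bool" where
  "rational_map_deg n f \<longleftrightarrow>
     (\<exists>P Q. coprime P Q \<and> max (degree P) (degree Q) = n \<and> f = rat_eval P Q)"

definition mobius :: "complex \<Rightarrow> complex \<Rightarrow> complex \<Rightarrow> complex \<Rightarrow> riem \<Rightarrow> riem" where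
  "mobius a b c d = rat_eval [:b, a:] [:d, c:]"

definition is_mobius :: "(riem \<Rightarrow> riem) \<Rightarrow> bool" where
  "is_mobius \<tau> \<longleftrightarrow> (\<exists>a b c d. a * d - b * c \<noteq> 0 \<and> \<tau> = mobius a b c d)"

definition Deck :: "(riem \<Rightarrow> riem) \<Rightarrow> (riem \<Rightarrow> riem) set" where
  "Deck F = {\<tau>. is_mobius \<tau> \<and> F \<circ> \<tau> = F}"

definition Deck_group :: "(riem \<Rightarrow> riem) \<Rightarrow> (riem \<Rightarrow> riem) monoid" where
  "Deck_group F = \<lparr>carrier = Deck F, mult = (\<circ>), one = id\<rparr>"

definition V4 :: "(int \<times> int) monoid" where
  "V4 = integer_mod_group 2 \<times>\<times> integer_mod_group 2"

text \<open>Standard charts of the Riemann sphere: z near a finite point, 1/z near infinity.\<close>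
definition chart_inv :: "riem \<Rightarrow> complex \<Rightarrow> riem" where
  "chart_inv p x = (case p of Fin a \<Rightarrow> Fin x | Infty \<Rightarrow> (if x = 0 then Infty else Fin (1 / x)))"

definition chart :: "riem \<Rightarrow> riem \<Rightarrow> complex" where
  "chart q y = (case q of
      Fin b \<Rightarrow> (case y of Fin w \<Rightarrow> w | Infty \<Rightarrow> 0)
    | Infty \<Rightarrow> (case y of Fin w \<Rightarrow> 1 / w | Infty \<Rightarrow> 0))"

definition chart_pt :: "riem \<Rightarrow> complex" where
  "chart_pt p = (case p of Fin a \<Rightarrow> a | Infty \<Rightarrow> 0)"

definition critical_point :: "(riem \<Rightarrow> riem) \<Rightarrow> riem \<Rightarrow> bool" where
  "critical_point f p \<longleftrightarrow>
     ((\<lambda>x. chart (f p) (f (chart_inv p x))) has_field_derivative 0) (at (chart_pt p))"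

definition fixed_points :: "(riem \<Rightarrow> riem) \<Rightarrow> riem set" where
  "fixed_points \<tau> = {z. \<tau> z = z}"

definition special_pairs :: "(riem \<Rightarrow> riem) set \<Rightarrow> riem set set" where
  "special_pairs G = {fixed_points \<tau> | \<tau>. \<tau> \<in> G \<and> \<tau> \<noteq> id}"

end

theory Submission
  imports Defs
begin


definition pt :: "complex \<times> complex \<Rightarrow> riem" where
  "pt v = (if snd v = 0 then Infty else Fin (fst v / snd v))"

definition dt :: "complex \<times> complex \<Rightarrow> complex \<times> complex \<Rightarrow> complex" where
  "dt v w = fst v * snd w - snd v * fst w"

lemma pt_eq:
  assumes "v \<noteq> (0,0)" "w \<noteq> (0,0)"
  shows "pt v = pt w \<longleftrightarrow> dt v w = 0"
proof -
  obtain a b where v: "v = (a,b)" by force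
  obtain c d where w: "w = (c,d)" by force
  show ?thesis using assms unfolding v w pt_def dt_def
    by (auto simp: field_simps)
qed

lemma pt_scale: "c \<noteq> 0 \<Longrightarrow> pt (c * x, c * y) = pt (x, y)"
  unfolding pt_def by auto

lemma pt_Fin: "Fin z = pt (z, 1)" unfolding pt_def by simp
lemma pt_Infty: "Infty = pt (1, 0)" unfolding pt_def by simp

lemma pt_surj: "\<exists>v. v \<noteq> (0,0) \<and> p = pt v"
proof (cases p)
  case (Fin z) then show ?thesis by (intro exI[of _ "(z,1)"]) (simp add: pt_Fin)
next
  case Infty then show ?thesis by (intro exI[of _ "(1,0)"]) (simp add: pt_Infty)
qed

lemma poly_deg2:
  fixes P :: "complex poly"
  assumes "degree P \<le> 2"
  shows "poly P z = coeff P 0 + coeff P 1 * z + coeff P 2 * z^2"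
proof -
  have "P = [:coeff P 0, coeff P 1, coeff P 2:]"
  proof (rule poly_eqI)
    fix n show "coeff P n = coeff [:coeff P 0, coeff P 1, coeff P 2:] n"
      using assms by (cases n; cases "n - 1"; auto simp: coeff_pCons coeff_eq_0 numeral_2_eq_2 split: nat.split)
  qed
  then have "poly P z = poly [:coeff P 0, coeff P 1, coeff P 2:] z" by simp
  also have "\<dots> = coeff P 0 + coeff P 1 * z + coeff P 2 * z^2" by (simp add: algebra_simps power2_eq_square)
  finally show ?thesis .
qed

lemma coprime_no_common_root:
  fixes P Q :: "complex poly"
  assumes "coprime P Q" "poly P z = 0" "poly Q z = 0"
  shows False
proof -
  have "[:-z,1:] dvd P" "[:-z,1:] dvd Q" using assms by (simp_all add: poly_eq_0_iff_dvd)
  then have "is_unit [:-z,1:]" using assms(1) coprime_common_divisor by blast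
  then show False by (simp add: is_unit_poly_iff)
qed

definition hq :: "complex \<Rightarrow> complex \<Rightarrow> complex \<Rightarrow> complex \<times> complex \<Rightarrow> complex" where
  "hq c2 c1 c0 v = c2 * fst v ^ 2 + c1 * fst v * snd v + c0 * snd v ^ 2"

lemma quad_rep:
  assumes "rational_map_deg 2 f"
  shows "\<exists>p2 p1 p0 q2 q1 q0. (\<forall>v. v \<noteq> (0,0) \<longrightarrow> f (pt v) = pt (hq p2 p1 p0 v, hq q2 q1 q0 v))
     \<and> (\<forall>v. v \<noteq> (0,0) \<longrightarrow> (hq p2 p1 p0 v, hq q2 q1 q0 v) \<noteq> (0,0))"
proof -
  obtain P Q where cop: "coprime P Q" and md: "max (degree P) (degree Q) = 2" and fd: "f = rat_eval P Q"
    using assms unfolding rational_map_deg_def by blast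
  have dP: "degree P \<le> 2" and dQ: "degree Q \<le> 2" using md by auto
  define p2 p1 p0 q2 q1 q0 where "p2 = coeff P 2" "p1 = coeff P 1" "p0 = coeff P 0"
    "q2 = coeff Q 2" "q1 = coeff Q 1" "q0 = coeff Q 0"
  note cdefs = p2_p1_p0_q2_q1_q0_def
  have PP: "poly P z = p0 + p1 * z + p2 * z^2" for z using poly_deg2[OF dP] cdefs by simp
  have QQ: "poly Q z = q0 + q1 * z + q2 * z^2" for z using poly_deg2[OF dQ] cdefs by simp
  have degP2: "degree P = 2 \<longleftrightarrow> p2 \<noteq> 0"
  proof
    assume d: "degree P = 2"
    then have "P \<noteq> 0" by auto
    then have "lead_coeff P \<noteq> 0" by simp
    then show "p2 \<noteq> 0" using cdefs d by simp
  next
    assume "p2 \<noteq> 0" then have "2 \<le> degree P" using cdefs le_degree by blast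
    then show "degree P = 2" using dP by simp
  qed
  have degQ2: "degree Q = 2 \<longleftrightarrow> q2 \<noteq> 0"
  proof
    assume d: "degree Q = 2"
    then have "Q \<noteq> 0" by auto
    then have "lead_coeff Q \<noteq> 0" by simp
    then show "q2 \<noteq> 0" using cdefs d by simp
  next
    assume "q2 \<noteq> 0" then have "2 \<le> degree Q" using cdefs le_degree by blast
    then show "degree Q = 2" using dQ by simp
  qed
  have hom: "hq c2 c1 c0 (x, y) = y^2 * (c0 + c1 * (x/y) + c2 * (x/y)^2)" if "y \<noteq> 0" for c2 c1 c0 x y
    using that unfolding hq_def by (simp add: field_simps power2_eq_square)
  have eval: "f (pt v) = pt (hq p2 p1 p0 v, hq q2 q1 q0 v)" if "v \<noteq> (0,0)" for v
  proof -
    obtain x y where v: "v = (x,y)" by force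
    show ?thesis
    proof (cases "y = 0")
      case False
      have "pt v = Fin (x/y)" using False v pt_def by simp
      moreover have "pt (hq p2 p1 p0 v, hq q2 q1 q0 v) = pt (poly P (x/y), poly Q (x/y))"
        unfolding v hom[OF False] PP QQ using False by (simp add: pt_scale)
      ultimately show ?thesis unfolding fd by (simp add: pt_def)
    next
      case True
      then have x: "x \<noteq> 0" using that v by auto
      have "pt v = Infty" using True v pt_def by simp
      moreover have "pt (hq p2 p1 p0 v, hq q2 q1 q0 v) = pt (p2, q2)"
        unfolding v hq_def using True x pt_scale[of "x^2" p2 q2] by (simp add: mult.commute)
      moreover have "rat_eval P Q Infty = pt (p2, q2)"
        using md degP2 degQ2 dP dQ cdefs by (auto simp: pt_def)
      ultimately show ?thesis unfolding fd by simp
    qed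
  qed
  have nz: "(hq p2 p1 p0 v, hq q2 q1 q0 v) \<noteq> (0,0)" if "v \<noteq> (0,0)" for v
  proof
    assume h: "(hq p2 p1 p0 v, hq q2 q1 q0 v) = (0,0)"
    obtain x y where v: "v = (x,y)" by force
    show False
    proof (cases "y = 0")
      case False
      have "poly P (x/y) = 0" "poly Q (x/y) = 0" using h hom[OF False] PP QQ False unfolding v by auto
      then show False using coprime_no_common_root cop by blast
    next
      case True
      then have x: "x \<noteq> 0" using that v by auto
      have "p2 = 0" "q2 = 0" using h True x unfolding v hq_def by auto
      then show False using md degP2 degQ2 dP dQ by linarith
    qed
  qed
  show ?thesis using eval nz by blast
qed



lemma mobius_pt:
  assumes "m1 * m4 - m2 * m3 \<noteq> 0" "v \<noteq> (0,0)"
  shows "mobius m1 m2 m3 m4 (pt v) = pt (m1 * fst v + m2 * snd v, m3 * fst v + m4 * snd v)"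
    and "(m1 * fst v + m2 * snd v, m3 * fst v + m4 * snd v) \<noteq> (0,0)"
proof -
  obtain x y where v: "v = (x,y)" by force
  show "(m1 * fst v + m2 * snd v, m3 * fst v + m4 * snd v) \<noteq> (0,0)"
  proof
    assume h: "(m1 * fst v + m2 * snd v, m3 * fst v + m4 * snd v) = (0,0)"
    then have e1: "m1 * x + m2 * y = 0" and e2: "m3 * x + m4 * y = 0" unfolding v by auto
    have "(m1 * m4 - m2 * m3) * x = m4 * (m1 * x + m2 * y) - m2 * (m3 * x + m4 * y)" by (simp add: algebra_simps)
    moreover have "(m1 * m4 - m2 * m3) * y = m1 * (m3 * x + m4 * y) - m3 * (m1 * x + m2 * y)" by (simp add: algebra_simps)
    ultimately have "(m1 * m4 - m2 * m3) * x = 0" "(m1 * m4 - m2 * m3) * y = 0" using e1 e2 by simp_all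
    then show False using assms v by auto
  qed
  show "mobius m1 m2 m3 m4 (pt v) = pt (m1 * fst v + m2 * snd v, m3 * fst v + m4 * snd v)"
  proof (cases "y = 0")
    case False
    have "pt v = Fin (x/y)" using False v pt_def by simp
    moreover have "pt (m1 * x + m2 * y, m3 * x + m4 * y) = pt (m1 * (x/y) + m2, m3 * (x/y) + m4)"
      using pt_scale[of y "m1 * (x/y) + m2" "m3 * (x/y) + m4"] False by (simp add: algebra_simps)
    ultimately show ?thesis unfolding v mobius_def by (simp add: pt_def algebra_simps)
  next
    case True
    then have x: "x \<noteq> 0" using assms v by auto
    have "pt (m1 * x + m2 * y, m3 * x + m4 * y) = pt (m1, m3)"
      using pt_scale[of x m1 m3] True x by (simp add: mult.commute)
    moreover have "pt v = Infty" using True v pt_def by simp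
    moreover have "rat_eval [:m2, m1:] [:m4, m3:] Infty = pt (m1, m3)"
      using assms(1) by (auto simp: pt_def)
    ultimately show ?thesis unfolding v mobius_def by simp
  qed
qed

lemma chart_Fin_pt: "chart (Fin b) (pt w) = fst w / snd w"
  unfolding chart_def pt_def by simp
lemma chart_Infty_pt: "chart Infty (pt w) = snd w / fst w"
  unfolding chart_def pt_def by simp
lemma chart_inv_Fin: "chart_inv (Fin a) t = pt (t, 1)"
  unfolding chart_inv_def pt_def by simp
lemma chart_inv_Infty: "chart_inv Infty t = pt (1, t)"
  unfolding chart_inv_def pt_def by simp

lemma deriv_quot_zero:
  fixes N D :: "complex \<Rightarrow> complex"
  assumes "((\<lambda>t. N t / D t) has_field_derivative 0) (at t0)"
    "(N has_field_derivative N') (at t0)" "(D has_field_derivative D') (at t0)" "D t0 \<noteq> 0"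
  shows "N' * D t0 - N t0 * D' = 0"
proof -
  have "((\<lambda>t. N t / D t) has_field_derivative (N' * D t0 - N t0 * D') / (D t0 * D t0)) (at t0)"
    using DERIV_divide[OF assms(2,3,4)] .
  then have "(N' * D t0 - N t0 * D') / (D t0 * D t0) = 0" using DERIV_unique assms(1) by blast
  then show ?thesis using assms(4) by simp
qed

definition Jq :: "complex \<Rightarrow> complex \<Rightarrow> complex \<Rightarrow> complex \<Rightarrow> complex \<Rightarrow> complex \<Rightarrow> complex \<times> complex \<Rightarrow> complex" where
  "Jq p2 p1 p0 q2 q1 q0 v = (2*p2*fst v + p1*snd v) * (q1*fst v + 2*q0*snd v) - (p1*fst v + 2*p0*snd v) * (2*q2*fst v + q1*snd v)"

lemma J1: "Jq p2 p1 p0 q2 q1 q0 (a,1) = 2 * ((2*p2*a+p1) * hq q2 q1 q0 (a,1) - hq p2 p1 p0 (a,1) * (2*q2*a+q1))"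
  unfolding Jq_def hq_def by (simp add: algebra_simps power2_eq_square)
lemma J2: "Jq p2 p1 p0 q2 q1 q0 (1,0) = -2 * (p1 * hq q2 q1 q0 (1,0) - hq p2 p1 p0 (1,0) * q1)"
  unfolding Jq_def hq_def by (simp add: algebra_simps power2_eq_square)

lemma crit_J:
  assumes eval: "\<forall>v. v \<noteq> (0,0) \<longrightarrow> f (pt v) = pt (hq p2 p1 p0 v, hq q2 q1 q0 v)"
    and nz: "\<forall>v. v \<noteq> (0,0) \<longrightarrow> (hq p2 p1 p0 v, hq q2 q1 q0 v) \<noteq> (0,0)"
    and v: "v \<noteq> (0,0)" and cr: "critical_point f (pt v)"
  shows "Jq p2 p1 p0 q2 q1 q0 v = 0"
proof -
  obtain x y where xy: "v = (x,y)" by force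
  have dN1: "((\<lambda>t. hq c2 c1 c0 (t,1)) has_field_derivative (2*c2*t + c1)) (at t)" for c2 c1 c0 t
    unfolding hq_def by (auto intro!: derivative_eq_intros)
  have dN2: "((\<lambda>t. hq c2 c1 c0 (1,t)) has_field_derivative (c1 + 2*c0*t)) (at t)" for c2 c1 c0 t
    unfolding hq_def by (auto intro!: derivative_eq_intros)
  show ?thesis
  proof (cases "y = 0")
    case False
    define a where "a = x / y"
    have pv: "pt v = Fin a" using False xy pt_def a_def by simp
    have Jv: "Jq p2 p1 p0 q2 q1 q0 v = y^2 * Jq p2 p1 p0 q2 q1 q0 (a,1)"
      unfolding xy Jq_def a_def using False by (simp add: field_simps power2_eq_square)
    have fe: "f (pt (t,1)) = pt (hq p2 p1 p0 (t,1), hq q2 q1 q0 (t,1))" for t using eval by simp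
    have nz1: "(hq p2 p1 p0 (a,1), hq q2 q1 q0 (a,1)) \<noteq> (0,0)" using nz by simp
    have cr': "((\<lambda>t. chart (f (Fin a)) (f (pt (t,1)))) has_field_derivative 0) (at a)"
      using cr unfolding pv critical_point_def by (simp add: chart_inv_Fin chart_pt_def)
    have "Jq p2 p1 p0 q2 q1 q0 (a,1) = 0"
    proof (cases "hq q2 q1 q0 (a,1) = 0")
      case False
      have "f (Fin a) = Fin (hq p2 p1 p0 (a,1) / hq q2 q1 q0 (a,1))"
        using fe[of a] False unfolding pt_Fin[symmetric] by (simp add: pt_def)
      then have "((\<lambda>t. hq p2 p1 p0 (t,1) / hq q2 q1 q0 (t,1)) has_field_derivative 0) (at a)"
        using cr' unfolding fe by (simp add: chart_Fin_pt)
      from deriv_quot_zero[OF this dN1 dN1 False] show ?thesis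
        unfolding J1 by simp
    next
      case True
      have h1: "hq p2 p1 p0 (a,1) \<noteq> 0" using True nz1 by auto
      have "f (Fin a) = Infty"
        using fe[of a] True unfolding pt_Fin[symmetric] by (simp add: pt_def)
      then have "((\<lambda>t. hq q2 q1 q0 (t,1) / hq p2 p1 p0 (t,1)) has_field_derivative 0) (at a)"
        using cr' unfolding fe by (simp add: chart_Infty_pt)
      from deriv_quot_zero[OF this dN1 dN1 h1] show ?thesis
        unfolding J1 by (simp add: algebra_simps)
    qed
    then show ?thesis using Jv by simp
  next
    case True
    then have x: "x \<noteq> 0" using v xy by auto
    have pv: "pt v = Infty" using True xy pt_def by simp
    have Jv: "Jq p2 p1 p0 q2 q1 q0 v = x^2 * Jq p2 p1 p0 q2 q1 q0 (1,0)"
      unfolding xy Jq_def using True by (simp add: field_simps power2_eq_square)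
    have fe: "f (pt (1,t)) = pt (hq p2 p1 p0 (1,t), hq q2 q1 q0 (1,t))" for t using eval by simp
    have nz1: "(hq p2 p1 p0 (1,0), hq q2 q1 q0 (1,0)) \<noteq> (0,0)" using nz by simp
    have cr': "((\<lambda>t. chart (f Infty) (f (pt (1,t)))) has_field_derivative 0) (at 0)"
      using cr unfolding pv critical_point_def by (simp add: chart_inv_Infty chart_pt_def)
    have "Jq p2 p1 p0 q2 q1 q0 (1,0) = 0"
    proof (cases "hq q2 q1 q0 (1,0) = 0")
      case False
      have "f Infty = Fin (hq p2 p1 p0 (1,0) / hq q2 q1 q0 (1,0))"
        using fe[of 0] False unfolding pt_Infty[symmetric] by (simp add: pt_def)
      then have "((\<lambda>t. hq p2 p1 p0 (1,t) / hq q2 q1 q0 (1,t)) has_field_derivative 0) (at 0)"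
        using cr' unfolding fe by (simp add: chart_Fin_pt)
      from deriv_quot_zero[OF this dN2 dN2 False] show ?thesis
        unfolding J2 by simp
    next
      case True
      have h1: "hq p2 p1 p0 (1,0) \<noteq> 0" using True nz1 by auto
      have "f Infty = Infty"
        using fe[of 0] True unfolding pt_Infty[symmetric] by (simp add: pt_def)
      then have "((\<lambda>t. hq q2 q1 q0 (1,t) / hq p2 p1 p0 (1,t)) has_field_derivative 0) (at 0)"
        using cr' unfolding fe by (simp add: chart_Infty_pt)
      from deriv_quot_zero[OF this dN2 dN2 h1] show ?thesis
        unfolding J2 by (simp add: algebra_simps)
    qed
    then show ?thesis using Jv by simp
  qed
qed



definition lin :: "complex \<times> complex \<Rightarrow> complex \<times> complex \<Rightarrow> complex \<times> complex \<Rightarrow> complex \<times> complex" where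
  "lin a b x = (fst x * fst a + snd x * fst b, fst x * snd a + snd x * snd b)"

definition gq :: "complex \<Rightarrow> complex \<Rightarrow> complex \<Rightarrow> complex \<Rightarrow> complex \<times> complex \<Rightarrow> complex \<times> complex" where
  "gq s t u w x = (s * fst x ^ 2 + u * snd x ^ 2, t * fst x ^ 2 + w * snd x ^ 2)"

lemma dt_lin: "dt (lin a b x) (lin a b y) = dt x y * dt a b"
  unfolding dt_def lin_def by (simp add: algebra_simps)

lemma lin_nz: "dt a b \<noteq> 0 \<Longrightarrow> x \<noteq> (0,0) \<Longrightarrow> lin a b x \<noteq> (0,0)"
  using dt_lin[of a b x "(1,1)"] dt_lin[of a b x "(1,0)"] dt_lin[of a b x "(0,1)"]
  by (cases x) (auto simp: dt_def)

lemma polar: "hq c2 c1 c0 (lin a b x) = fst x ^ 2 * hq c2 c1 c0 a + fst x * snd x * (2*c2*fst a*fst b + c1*(fst a*snd b + snd a*fst b) + 2*c0*snd a*snd b) + snd x ^ 2 * hq c2 c1 c0 b"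
  unfolding hq_def lin_def by (simp add: algebra_simps power2_eq_square)

lemma normal_form:
  assumes quad: "rational_map_deg 2 f"
    and cr1: "critical_point f c1" and cr2: "critical_point f c2"
    and dcv: "f c1 \<noteq> f c2"
  shows "\<exists>a b s t u w. dt a b = 1 \<and> c1 = pt a \<and> c2 = pt b \<and> s * w - t * u \<noteq> 0 \<and>
     (\<forall>x. x \<noteq> (0,0) \<longrightarrow> f (pt (lin a b x)) = pt (lin a b (gq s t u w x)))"
proof -
  obtain p2 p1 p0 q2 q1 q0 where
    eval: "\<forall>v. v \<noteq> (0,0) \<longrightarrow> f (pt v) = pt (hq p2 p1 p0 v, hq q2 q1 q0 v)" and
    nz: "\<forall>v. v \<noteq> (0,0) \<longrightarrow> (hq p2 p1 p0 v, hq q2 q1 q0 v) \<noteq> (0,0)"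
    using quad_rep[OF quad] by blast
  define F where "F v = (hq p2 p1 p0 v, hq q2 q1 q0 v)" for v
  obtain a where a: "a \<noteq> (0,0)" "c1 = pt a" using pt_surj by blast
  obtain b0 where b0: "b0 \<noteq> (0,0)" "c2 = pt b0" using pt_surj by blast
  have "c1 \<noteq> c2" using dcv by auto
  then have D0: "dt a b0 \<noteq> 0" using pt_eq a b0 by auto
  define b where "b = (fst b0 / dt a b0, snd b0 / dt a b0)"
  have "dt a b = dt a b0 / dt a b0" unfolding b_def dt_def by (simp only: fst_conv snd_conv times_divide_eq_right diff_divide_distrib)
  then have Dab: "dt a b = 1" using D0 by simp
  have bnz: "b \<noteq> (0,0)" using Dab by (auto simp: dt_def)
  have cb: "c2 = pt b"
    using b0 pt_scale[of "1 / dt a b0" "fst b0" "snd b0"] D0 unfolding b_def by (cases b0) simp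
  have Ja: "Jq p2 p1 p0 q2 q1 q0 a = 0" using crit_J[OF eval nz a(1)] cr1 a by simp
  have Jb: "Jq p2 p1 p0 q2 q1 q0 b = 0" using crit_J[OF eval nz bnz] cr2 cb by simp
  define A where "A = F a"
  define B where "B = F b"
  have fc1: "f c1 = pt A" using eval a unfolding A_def F_def by metis
  have fc2: "f c2 = pt B" using eval bnz cb unfolding B_def F_def by metis
  have Anz: "A \<noteq> (0,0)" using nz a unfolding A_def F_def by metis
  have Bnz: "B \<noteq> (0,0)" using nz bnz unfolding B_def F_def by metis
  have DAB: "dt A B \<noteq> 0" using dcv fc1 fc2 pt_eq Anz Bnz by auto
  define XP where "XP = 2*p2*fst a*fst b + p1*(fst a*snd b + snd a*fst b) + 2*p0*snd a*snd b"
  define XQ where "XQ = 2*q2*fst a*fst b + q1*(fst a*snd b + snd a*fst b) + 2*q0*snd a*snd b"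
  have i1: "dt a b * Jq p2 p1 p0 q2 q1 q0 a = 2 * (fst A * XQ - XP * snd A)"
    unfolding A_def F_def XP_def XQ_def Jq_def hq_def dt_def by (simp add: algebra_simps power2_eq_square)
  have i2: "dt a b * Jq p2 p1 p0 q2 q1 q0 b = 2 * (XP * snd B - fst B * XQ)"
    unfolding B_def F_def XP_def XQ_def Jq_def hq_def dt_def by (simp add: algebra_simps power2_eq_square)
  have e1: "fst A * XQ - XP * snd A = 0" using i1 Ja by simp
  have e2: "XP * snd B - fst B * XQ = 0" using i2 Jb by simp
  have "XP * dt A B = fst A * (XP * snd B - fst B * XQ) + fst B * (fst A * XQ - XP * snd A)"
    unfolding dt_def by (simp add: algebra_simps)
  then have XP0: "XP = 0" using e1 e2 DAB by simp
  have "XQ * dt A B = snd A * (XP * snd B - fst B * XQ) + snd B * (fst A * XQ - XP * snd A)"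
    unfolding dt_def by (simp add: algebra_simps)
  then have XQ0: "XQ = 0" using e1 e2 DAB by simp
  define s where "s = dt A b"
  define t where "t = dt a A"
  define u where "u = dt B b"
  define w where "w = dt a B"
  have linv: "lin a b (dt v b, dt a v) = v" for v
  proof -
    have "lin a b (dt v b, dt a v) = (fst v * dt a b, snd v * dt a b)"
      unfolding lin_def dt_def by (simp add: algebra_simps)
    then show ?thesis using Dab by simp
  qed
  have LA: "lin a b (s, t) = A" using linv unfolding s_def t_def by simp
  have LB: "lin a b (u, w) = B" using linv unfolding u_def w_def by simp
  have "dt A B = (s * w - t * u) * dt a b"
    using dt_lin[of a b "(s,t)" "(u,w)"] LA LB by (simp add: dt_def)
  then have det: "s * w - t * u \<noteq> 0" using DAB by auto
  have Fx: "F (lin a b x) = lin a b (gq s t u w x)" for x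
  proof -
    have "F (lin a b x) = (fst x ^ 2 * fst A + snd x ^ 2 * fst B, fst x ^ 2 * snd A + snd x ^ 2 * snd B)"
      using polar[of p2 p1 p0 a b x] polar[of q2 q1 q0 a b x] XP0 XQ0
      unfolding F_def A_def B_def XP_def XQ_def by simp
    also have "\<dots> = lin a b (gq s t u w x)"
      using LA LB unfolding lin_def gq_def by (auto simp: algebra_simps)
    finally show ?thesis .
  qed
  have "\<forall>x. x \<noteq> (0,0) \<longrightarrow> f (pt (lin a b x)) = pt (lin a b (gq s t u w x))"
  proof (intro allI impI)
    fix x :: "complex \<times> complex" assume "x \<noteq> (0,0)"
    then have "lin a b x \<noteq> (0,0)" using lin_nz Dab by simp
    then show "f (pt (lin a b x)) = pt (lin a b (gq s t u w x))" using eval Fx unfolding F_def by metis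
  qed
  then show ?thesis using Dab a cb det by blast
qed



lemma V4_carrier: "carrier V4 = {0,1} \<times> {0,1}"
  unfolding V4_def DirProd_def by (auto simp: carrier_integer_mod_group)

lemma V4_mult: "mult V4 p q = ((fst p + fst q) mod 2, (snd p + snd q) mod 2)"
  unfolding V4_def DirProd_def integer_mod_group_def by (auto split: prod.splits)

lemma klein_group:
  fixes i j :: "'a \<Rightarrow> 'a"
  assumes ii: "i \<circ> i = id" and jj: "j \<circ> j = id" and ij: "i \<circ> j = j \<circ> i"
    and d: "i \<noteq> id" "j \<noteq> id" "i \<circ> j \<noteq> id" "i \<noteq> j" "i \<noteq> i \<circ> j" "j \<noteq> i \<circ> j"
  defines "G \<equiv> \<lparr>carrier = {id, i, j, i \<circ> j}, mult = (\<circ>), one = id\<rparr>"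
  shows "group G \<and> G \<cong> V4"
proof -
  have ii': "i \<circ> (i \<circ> h) = h" for h using ii by (metis comp_assoc id_comp)
  have jj': "j \<circ> (j \<circ> h) = h" for h using jj by (metis comp_assoc id_comp)
  have ji': "j \<circ> (i \<circ> h) = i \<circ> (j \<circ> h)" for h using ij by (metis comp_assoc)
  note rules = ii jj ii' jj' ji' ij[symmetric] comp_assoc
  have grp: "group G"
  proof (rule groupI)
    fix x y assume "x \<in> carrier G" "y \<in> carrier G"
    then show "x \<otimes>\<^bsub>G\<^esub> y \<in> carrier G" unfolding G_def by (auto simp: rules)
  next
    show "\<one>\<^bsub>G\<^esub> \<in> carrier G" unfolding G_def by simp
  next
    fix x y z show "x \<otimes>\<^bsub>G\<^esub> y \<otimes>\<^bsub>G\<^esub> z = x \<otimes>\<^bsub>G\<^esub> (y \<otimes>\<^bsub>G\<^esub> z)" unfolding G_def by (simp add: comp_assoc)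
  next
    fix x show "\<one>\<^bsub>G\<^esub> \<otimes>\<^bsub>G\<^esub> x = x" unfolding G_def by simp
  next
    fix x assume "x \<in> carrier G"
    then show "\<exists>y\<in>carrier G. y \<otimes>\<^bsub>G\<^esub> x = \<one>\<^bsub>G\<^esub>" unfolding G_def
      by (intro bexI[of _ x]) (auto simp: rules)
  qed
  define h where "h p = (if fst p = 1 then i else id) \<circ> (if snd p = 1 then j else id)" for p :: "int \<times> int"
  have hom: "h \<in> hom V4 G"
  proof (rule homI)
    fix x assume "x \<in> carrier V4" then show "h x \<in> carrier G" unfolding V4_carrier G_def h_def by auto
  next
    fix x y assume "x \<in> carrier V4" "y \<in> carrier V4"
    then have "x \<in> {(0,0),(0,1),(1,0),(1,1)}" "y \<in> {(0,0),(0,1),(1,0),(1,1)}" unfolding V4_carrier by auto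
    then show "h (x \<otimes>\<^bsub>V4\<^esub> y) = h x \<otimes>\<^bsub>G\<^esub> h y" unfolding G_def h_def V4_mult
      by (elim insertE emptyE; simp only: monoid.simps fst_conv snd_conv; simp add: rules)
  qed
  have bij: "bij_betw h (carrier V4) (carrier G)"
  proof -
    have im: "h ` ({0,1} \<times> {0,1}) = {id, i, j, i \<circ> j}" unfolding h_def by auto
    have "inj_on h ({0,1} \<times> {0,1})" unfolding inj_on_def h_def using d by auto
    then show ?thesis unfolding bij_betw_def V4_carrier G_def using im by simp
  qed
  have "V4 \<cong> G" using hom bij unfolding is_iso_def iso_def by blast
  moreover have "group V4" unfolding V4_def by (intro DirProd_group group_integer_mod_group)
  ultimately show ?thesis using grp group.iso_sym by blast
qed



definition mv :: "complex \<Rightarrow> complex \<Rightarrow> complex \<Rightarrow> complex \<Rightarrow> complex \<times> complex \<Rightarrow> complex \<times> complex" where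
  "mv m1 m2 m3 m4 v = (m1 * fst v + m2 * snd v, m3 * fst v + m4 * snd v)"

definition psi :: "complex \<times> complex \<Rightarrow> complex \<times> complex \<Rightarrow> complex \<times> complex \<Rightarrow> riem" where
  "psi a b x = pt (lin a b x)"

lemma psi_eq: "dt a b = 1 \<Longrightarrow> x \<noteq> (0,0) \<Longrightarrow> y \<noteq> (0,0) \<Longrightarrow> psi a b x = psi a b y \<longleftrightarrow> dt x y = 0"
proof -
  assume D: "dt a b = 1" and x: "x \<noteq> (0,0)" and y: "y \<noteq> (0,0)"
  have "lin a b x \<noteq> (0,0)" "lin a b y \<noteq> (0,0)" using lin_nz D x y by auto
  then have "psi a b x = psi a b y \<longleftrightarrow> dt (lin a b x) (lin a b y) = 0" unfolding psi_def by (rule pt_eq)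
  then show ?thesis using dt_lin[of a b x y] D by simp
qed

lemma linv: "dt a b = 1 \<Longrightarrow> lin a b (dt v b, dt a v) = v"
proof -
  assume D: "dt a b = 1"
  have "lin a b (dt v b, dt a v) = (fst v * dt a b, snd v * dt a b)"
    unfolding lin_def dt_def by ((simp only: fst_conv snd_conv prod_eq_iff)?, algebra)
  then show ?thesis using D by simp
qed

lemma psi_surj: "dt a b = 1 \<Longrightarrow> \<exists>x. x \<noteq> (0,0) \<and> p = psi a b x"
proof -
  assume D: "dt a b = 1"
  obtain v where v: "v \<noteq> (0,0)" "p = pt v" using pt_surj by blast
  have "(dt v b, dt a v) \<noteq> (0,0)" using linv[OF D, of v] v(1) by (auto simp: lin_def)
  then show ?thesis using linv[OF D, of v] v unfolding psi_def by metis
qed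

lemma fun_ext_psi:
  assumes "dt a b = 1" "\<And>x. x \<noteq> (0,0) \<Longrightarrow> F (psi a b x) = G (psi a b x)"
  shows "F = G"
proof
  fix p obtain x where "x \<noteq> (0,0)" "p = psi a b x" using psi_surj[OF assms(1)] by blast
  then show "F p = G p" using assms(2) by simp
qed

lemma mv_nz: "m1 * m4 - m2 * m3 \<noteq> 0 \<Longrightarrow> v \<noteq> (0,0) \<Longrightarrow> mv m1 m2 m3 m4 v \<noteq> (0,0)"
  using mobius_pt(2) unfolding mv_def by blast

definition mobN where
  "mobN a b n1 n2 n3 n4 = mobius
     (fst a * (n1 * snd b - n2 * snd a) + fst b * (n3 * snd b - n4 * snd a))
     (fst a * (n2 * fst a - n1 * fst b) + fst b * (n4 * fst a - n3 * fst b))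
     (snd a * (n1 * snd b - n2 * snd a) + snd b * (n3 * snd b - n4 * snd a))
     (snd a * (n2 * fst a - n1 * fst b) + snd b * (n4 * fst a - n3 * fst b))"

lemma mobN:
  assumes D: "dt a b = 1" and N: "n1 * n4 - n2 * n3 \<noteq> 0"
  shows "is_mobius (mobN a b n1 n2 n3 n4)"
    and "x \<noteq> (0,0) \<Longrightarrow> mobN a b n1 n2 n3 n4 (psi a b x) = psi a b (mv n1 n2 n3 n4 x)"
proof -
  obtain a1 a2 where av: "a = (a1,a2)" by force
  obtain b1 b2 where bv: "b = (b1,b2)" by force
  define m1 where "m1 = fst a * (n1 * snd b - n2 * snd a) + fst b * (n3 * snd b - n4 * snd a)"
  define m2 where "m2 = fst a * (n2 * fst a - n1 * fst b) + fst b * (n4 * fst a - n3 * fst b)"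
  define m3 where "m3 = snd a * (n1 * snd b - n2 * snd a) + snd b * (n3 * snd b - n4 * snd a)"
  define m4 where "m4 = snd a * (n2 * fst a - n1 * fst b) + snd b * (n4 * fst a - n3 * fst b)"
  have "m1 * m4 - m2 * m3 = (n1 * n4 - n2 * n3) * dt a b ^ 2"
    unfolding m1_def m2_def m3_def m4_def dt_def av bv fst_conv snd_conv by algebra
  then have det: "m1 * m4 - m2 * m3 \<noteq> 0" using D N by simp
  have eq: "mobN a b n1 n2 n3 n4 = mobius m1 m2 m3 m4" unfolding mobN_def m1_def m2_def m3_def m4_def ..
  show "is_mobius (mobN a b n1 n2 n3 n4)" unfolding eq is_mobius_def using det by blast
  assume x: "x \<noteq> (0,0)"
  have Lx: "lin a b x \<noteq> (0,0)" using lin_nz D x by simp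
  obtain x1 x2 where xv: "x = (x1,x2)" by force
  have "mv m1 m2 m3 m4 (lin a b x) = (dt a b * fst (lin a b (mv n1 n2 n3 n4 x)), dt a b * snd (lin a b (mv n1 n2 n3 n4 x)))"
    unfolding mv_def lin_def m1_def m2_def m3_def m4_def dt_def av bv xv fst_conv snd_conv prod_eq_iff
    by (rule conjI; algebra)
  then have "mv m1 m2 m3 m4 (lin a b x) = lin a b (mv n1 n2 n3 n4 x)" using D by simp
  then show "mobN a b n1 n2 n3 n4 (psi a b x) = psi a b (mv n1 n2 n3 n4 x)"
    unfolding eq psi_def using mobius_pt(1)[OF det Lx] by (simp add: mv_def)
qed

lemma mob_rep:
  assumes D: "dt a b = 1" and m: "is_mobius \<tau>"
  shows "\<exists>n1 n2 n3 n4. n1 * n4 - n2 * n3 \<noteq> 0 \<and>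
     (\<forall>x. x \<noteq> (0,0) \<longrightarrow> \<tau> (psi a b x) = psi a b (mv n1 n2 n3 n4 x))"
proof -
  obtain a1 a2 where av: "a = (a1,a2)" by force
  obtain b1 b2 where bv: "b = (b1,b2)" by force
  obtain m1 m2 m3 m4 where det: "m1 * m4 - m2 * m3 \<noteq> 0" and t: "\<tau> = mobius m1 m2 m3 m4"
    using m unfolding is_mobius_def by blast
  define M where "M = mv m1 m2 m3 m4"
  define n1 where "n1 = dt (M a) b"
  define n2 where "n2 = dt (M b) b"
  define n3 where "n3 = dt a (M a)"
  define n4 where "n4 = dt a (M b)"
  have "n1 * n4 - n2 * n3 = (m1 * m4 - m2 * m3) * dt a b ^ 2"
    unfolding n1_def n2_def n3_def n4_def M_def mv_def dt_def av bv fst_conv snd_conv by algebra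
  then have detN: "n1 * n4 - n2 * n3 \<noteq> 0" using D det by simp
  have "\<tau> (psi a b x) = psi a b (mv n1 n2 n3 n4 x)" if x: "x \<noteq> (0,0)" for x
  proof -
    have Lx: "lin a b x \<noteq> (0,0)" using lin_nz D x by simp
    obtain x1 x2 where xv: "x = (x1,x2)" by force
    have "mv n1 n2 n3 n4 x = (dt (M (lin a b x)) b, dt a (M (lin a b x)))"
      unfolding n1_def n2_def n3_def n4_def M_def mv_def dt_def lin_def av bv xv fst_conv snd_conv prod_eq_iff
      by (rule conjI; algebra)
    then have "lin a b (mv n1 n2 n3 n4 x) = M (lin a b x)" using linv[OF D] by simp
    then show ?thesis unfolding t psi_def using mobius_pt(1)[OF det Lx] by (simp add: M_def mv_def)
  qed
  then show ?thesis using detN by blast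
qed



lemma stuw_nz:
  fixes s t u w :: complex
  assumes "s * w + t * u = 0" "s * w - t * u \<noteq> 0"
  shows "s \<noteq> 0" "t \<noteq> 0" "u \<noteq> 0" "w \<noteq> 0"
proof -
  have "s * w \<noteq> 0" using assms by (metis add_diff_cancel_left' diff_0 diff_add_cancel minus_diff_eq right_minus_eq)
  moreover have "t * u \<noteq> 0" using assms by (metis add.right_neutral diff_0 minus_diff_eq right_minus_eq)
  ultimately show "s \<noteq> 0" "t \<noteq> 0" "u \<noteq> 0" "w \<noteq> 0" by auto
qed

lemma gq_nz:
  assumes "s * w - t * u \<noteq> 0" "x \<noteq> (0,0)"
  shows "gq s t u w x \<noteq> (0,0)"
proof
  assume h: "gq s t u w x = (0,0)"
  obtain x1 x2 where xv: "x = (x1,x2)" by force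
  have e1: "s * x1^2 + u * x2^2 = 0" and e2: "t * x1^2 + w * x2^2 = 0" using h xv by (auto simp: gq_def)
  have "(s * w - t * u) * x1^2 = w * (s * x1^2 + u * x2^2) - u * (t * x1^2 + w * x2^2)" by algebra
  then have "x1 = 0" using e1 e2 assms(1) by simp
  have "(s * w - t * u) * x2^2 = s * (t * x1^2 + w * x2^2) - t * (s * x1^2 + u * x2^2)" by algebra
  then have "x2 = 0" using e1 e2 assms(1) by simp
  then show False using \<open>x1 = 0\<close> xv assms(2) by simp
qed

lemma id1: "dt (gq s t u w y) (gq s t u w x) = - (s * w - t * u) * dt y x * dt y (mv 1 0 0 (-1) x)"
proof -
  obtain y1 y2 where yv: "y = (y1,y2)" by force
  obtain x1 x2 where xv: "x = (x1,x2)" by force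
  show ?thesis unfolding yv xv gq_def dt_def mv_def fst_conv snd_conv by algebra
qed

lemma id2: assumes H: "s * w + t * u = 0"
  shows "s * dt (gq s t u w y) (mv 1 0 0 (-1) (gq s t u w x)) = 2 * t * dt y (mv 0 u s 0 x) * dt y (mv 0 u (-s) 0 x)"
proof -
  obtain y1 y2 where yv: "y = (y1,y2)" by force
  obtain x1 x2 where xv: "x = (x1,x2)" by force
  show ?thesis using H unfolding yv xv gq_def dt_def mv_def fst_conv snd_conv by algebra
qed

lemma key:
  assumes H: "s * w + t * u = 0" and det: "s * w - t * u \<noteq> 0"
  shows "dt (gq s t u w (gq s t u w y)) (gq s t u w (gq s t u w x)) = 0 \<longleftrightarrow>
    dt y x * dt y (mv 1 0 0 (-1) x) * dt y (mv 0 u s 0 x) * dt y (mv 0 u (-s) 0 x) = 0"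
proof -
  have nz: "s \<noteq> 0" "t \<noteq> 0" using stuw_nz[OF H det] by auto
  have "s * dt (gq s t u w (gq s t u w y)) (gq s t u w (gq s t u w x)) =
     - (s * w - t * u) * dt (gq s t u w y) (gq s t u w x) * (s * dt (gq s t u w y) (mv 1 0 0 (-1) (gq s t u w x)))"
    unfolding id1 by (simp add: algebra_simps)
  also have "\<dots> = (s * w - t * u) ^ 2 * (2 * t) * (dt y x * dt y (mv 1 0 0 (-1) x) * dt y (mv 0 u s 0 x) * dt y (mv 0 u (-s) 0 x))"
    unfolding id2[OF H] id1 by (simp add: algebra_simps power2_eq_square)
  finally show ?thesis using nz det by auto
qed

lemma four_qf:
  assumes "\<forall>x. x \<noteq> (0,0) \<longrightarrow> hq a2 a1 a0 x * hq b2 b1 b0 x * hq c2 c1 c0 x * hq d2 d1 d0 x = 0"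
  shows "(a2 = 0 \<and> a1 = 0 \<and> a0 = 0) \<or> (b2 = 0 \<and> b1 = 0 \<and> b0 = 0) \<or> (c2 = 0 \<and> c1 = 0 \<and> c0 = 0) \<or> (d2 = 0 \<and> d1 = 0 \<and> d0 = 0)"
proof -
  have p: "hq e2 e1 e0 (z,1) = poly [:e0, e1, e2:] z" for e2 e1 e0 z unfolding hq_def by (simp add: algebra_simps power2_eq_square)
  have "\<forall>z. poly ([:a0,a1,a2:] * [:b0,b1,b2:] * [:c0,c1,c2:] * [:d0,d1,d2:]) z = 0"
  proof
    fix z
    have "hq a2 a1 a0 (z,1) * hq b2 b1 b0 (z,1) * hq c2 c1 c0 (z,1) * hq d2 d1 d0 (z,1) = 0"
      using assms[rule_format, of "(z,1)"] by simp
    then show "poly ([:a0,a1,a2:] * [:b0,b1,b2:] * [:c0,c1,c2:] * [:d0,d1,d2:]) z = 0"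
      unfolding p poly_mult .
  qed
  then have "[:a0,a1,a2:] * [:b0,b1,b2:] * [:c0,c1,c2:] * [:d0,d1,d2:] = 0" using poly_all_0_iff_0 by blast
  then show ?thesis by (simp only: mult_eq_0_iff pCons_eq_0_iff) blast
qed



lemma dt_self: "dt v v = 0" unfolding dt_def by (simp add: mult.commute)

lemma qf_forms:
  fixes n1 n2 n3 n4 s u :: complex
  shows "dt (mv n1 n2 n3 n4 x) x = hq (-n3) (n1 - n4) n2 x"
    and "dt (mv n1 n2 n3 n4 x) (mv 1 0 0 (-1) x) = hq (-n3) (-(n1 + n4)) (-n2) x"
    and "dt (mv n1 n2 n3 n4 x) (mv 0 u s 0 x) = hq (s*n1) (s*n2 - u*n3) (-(u*n4)) x"
    and "dt (mv n1 n2 n3 n4 x) (mv 0 u (-s) 0 x) = hq (-(s*n1)) (-(s*n2 + u*n3)) (-(u*n4)) x"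
proof -
  obtain x1 x2 where xv: "x = (x1,x2)" by force
  show "dt (mv n1 n2 n3 n4 x) x = hq (-n3) (n1 - n4) n2 x"
    unfolding xv dt_def mv_def hq_def fst_conv snd_conv by algebra
  show "dt (mv n1 n2 n3 n4 x) (mv 1 0 0 (-1) x) = hq (-n3) (-(n1 + n4)) (-n2) x"
    unfolding xv dt_def mv_def hq_def fst_conv snd_conv by algebra
  show "dt (mv n1 n2 n3 n4 x) (mv 0 u s 0 x) = hq (s*n1) (s*n2 - u*n3) (-(u*n4)) x"
    unfolding xv dt_def mv_def hq_def fst_conv snd_conv by algebra
  show "dt (mv n1 n2 n3 n4 x) (mv 0 u (-s) 0 x) = hq (-(s*n1)) (-(s*n2 + u*n3)) (-(u*n4)) x"
    unfolding xv dt_def mv_def hq_def fst_conv snd_conv by algebra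
qed

lemma hq_zero: "hq 0 0 0 x = 0" unfolding hq_def by simp
lemma hq_zero': "e2 = 0 \<and> e1 = 0 \<and> e0 = 0 \<Longrightarrow> \<forall>x. hq e2 e1 e0 x = 0" unfolding hq_def by simp

theorem mainTheorem15:
  fixes f :: "riem \<Rightarrow> riem" and c\<^sub>1 c\<^sub>2 :: riem
  assumes quad: "rational_map_deg 2 f"
    and crit: "{c. critical_point f c} = {c\<^sub>1, c\<^sub>2}"
    and distinct_cv: "f c\<^sub>1 \<noteq> f c\<^sub>2"
    and coalesce: "f (f c\<^sub>1) = f (f c\<^sub>2)"
  shows "group (Deck_group (f \<circ> f)) \<and> Deck_group (f \<circ> f) \<cong> V4
         \<and> special_pairs (Deck (f \<circ> f)) = {{c\<^sub>1, c\<^sub>2}, f -` {c\<^sub>1}, f -` {c\<^sub>2}}"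
proof -
  have cr1: "critical_point f c\<^sub>1" and cr2: "critical_point f c\<^sub>2" using crit by blast+
  obtain a b s t u w where D: "dt a b = 1" and ca: "c\<^sub>1 = pt a" and cb: "c\<^sub>2 = pt b"
    and det: "s * w - t * u \<noteq> 0"
    and fe0: "\<forall>x. x \<noteq> (0,0) \<longrightarrow> f (pt (lin a b x)) = pt (lin a b (gq s t u w x))"
    using normal_form[OF quad cr1 cr2 distinct_cv] by blast
  define \<psi> where "\<psi> = psi a b"
  define g where "g = gq s t u w"
  have fe: "f (\<psi> x) = \<psi> (g x)" if "x \<noteq> (0,0)" for x using fe0 that unfolding \<psi>_def g_def psi_def by blast
  have gnz: "x \<noteq> (0,0) \<Longrightarrow> g x \<noteq> (0,0)" for x unfolding g_def using gq_nz det by blast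
  have peq: "x \<noteq> (0,0) \<Longrightarrow> y \<noteq> (0,0) \<Longrightarrow> \<psi> x = \<psi> y \<longleftrightarrow> dt x y = 0" for x y
    unfolding \<psi>_def using psi_eq D by blast
  have c1: "c\<^sub>1 = \<psi> (1,0)" unfolding ca \<psi>_def psi_def lin_def by simp
  have c2: "c\<^sub>2 = \<psi> (0,1)" unfolding cb \<psi>_def psi_def lin_def by simp
  have g10: "g (1,0) = (s,t)" and g01: "g (0,1) = (u,w)" unfolding g_def gq_def by simp_all
  have st: "(s,t) \<noteq> (0,0)" and uw: "(u,w) \<noteq> (0,0)" using gnz[of "(1,0)"] gnz[of "(0,1)"] g10 g01 by auto
  have "\<psi> (g (s,t)) = \<psi> (g (u,w))"
    using coalesce fe c1 c2 g10 g01 st uw by (metis zero_neq_one old.prod.inject)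
  then have "dt (g (s,t)) (g (u,w)) = 0" using peq gnz st uw by blast
  then have "(s * w - t * u) * (s * w - t * u) * (s * w + t * u) = 0"
    unfolding g_def id1 by (simp add: dt_def mv_def algebra_simps)
  then have H: "s * w + t * u = 0" using det by simp
  have nzs: "s \<noteq> 0" "t \<noteq> 0" "u \<noteq> 0" "w \<noteq> 0" using stuw_nz[OF H det] by auto
  have ext: "(\<And>x. x \<noteq> (0,0) \<Longrightarrow> F (\<psi> x) = G (\<psi> x)) \<Longrightarrow> F = G" for F G :: "riem \<Rightarrow> riem"
    unfolding \<psi>_def using fun_ext_psi[OF D] by blast
  define \<iota> where "\<iota> = mobN a b 1 0 0 (-1)"
  define \<sigma> where "\<sigma> = mobN a b 0 u s 0"
  define \<kappa> where "\<kappa> = mobN a b 0 u (-s) 0"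
  define e where "e = mobN a b 1 0 0 1"
  have d1: "(1::complex) * (-1) - 0 * 0 \<noteq> 0" and d2: "(0::complex) * 0 - u * s \<noteq> 0"
    and d3: "(0::complex) * 0 - u * (-s) \<noteq> 0" and d4: "(1::complex) * 1 - 0 * 0 \<noteq> 0" using nzs by auto
  have mob: "is_mobius \<iota>" "is_mobius \<sigma>" "is_mobius \<kappa>" "is_mobius e"
    unfolding \<iota>_def \<sigma>_def \<kappa>_def e_def using mobN(1)[OF D] d1 d2 d3 d4 by blast+
  have \<iota>a: "\<iota> (\<psi> x) = \<psi> (mv 1 0 0 (-1) x)" if "x \<noteq> (0,0)" for x
    unfolding \<iota>_def \<psi>_def using mobN(2)[OF D d1 that] .
  have \<sigma>a: "\<sigma> (\<psi> x) = \<psi> (mv 0 u s 0 x)" if "x \<noteq> (0,0)" for x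
    unfolding \<sigma>_def \<psi>_def using mobN(2)[OF D d2 that] .
  have \<kappa>a: "\<kappa> (\<psi> x) = \<psi> (mv 0 u (-s) 0 x)" if "x \<noteq> (0,0)" for x
    unfolding \<kappa>_def \<psi>_def using mobN(2)[OF D d3 that] .
  have ea: "e (\<psi> x) = \<psi> (mv 1 0 0 1 x)" if "x \<noteq> (0,0)" for x
    unfolding e_def \<psi>_def using mobN(2)[OF D d4 that] .
  have mvnz: "x \<noteq> (0,0) \<Longrightarrow> mv m1 m2 m3 m4 x \<noteq> (0,0)" if "m1 * m4 - m2 * m3 \<noteq> 0" for x m1 m2 m3 m4
    using mv_nz that by blast
  have e_id: "e = id" by (rule ext) (simp add: ea mv_def)
  have \<iota>\<sigma>: "\<iota> \<circ> \<sigma> = \<kappa>"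
  proof (rule ext)
    fix x :: "complex \<times> complex" assume x: "x \<noteq> (0,0)"
    have "(\<iota> \<circ> \<sigma>) (\<psi> x) = \<psi> (mv 1 0 0 (-1) (mv 0 u s 0 x))" using x by (simp add: \<sigma>a \<iota>a mvnz[OF d2])
    also have "mv 1 0 0 (-1) (mv 0 u s 0 x) = mv 0 u (-s) 0 x" by (simp add: mv_def)
    finally show "(\<iota> \<circ> \<sigma>) (\<psi> x) = \<kappa> (\<psi> x)" using \<kappa>a x by simp
  qed
  have \<iota>\<iota>: "\<iota> \<circ> \<iota> = id"
  proof (rule ext)
    fix x :: "complex \<times> complex" assume x: "x \<noteq> (0,0)"
    have "(\<iota> \<circ> \<iota>) (\<psi> x) = \<psi> (mv 1 0 0 (-1) (mv 1 0 0 (-1) x))" using x by (simp add: \<iota>a mvnz[OF d1])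
    also have "mv 1 0 0 (-1) (mv 1 0 0 (-1) x) = x" by (simp add: mv_def)
    finally show "(\<iota> \<circ> \<iota>) (\<psi> x) = id (\<psi> x)" by simp
  qed
  have \<sigma>\<sigma>: "\<sigma> \<circ> \<sigma> = id"
  proof (rule ext)
    fix x :: "complex \<times> complex" assume x: "x \<noteq> (0,0)"
    have "(\<sigma> \<circ> \<sigma>) (\<psi> x) = \<psi> (mv 0 u s 0 (mv 0 u s 0 x))" using x by (simp add: \<sigma>a mvnz[OF d2])
    also have "\<dots> = \<psi> x" using peq[OF mvnz[OF d2 mvnz[OF d2 x]] x] by (simp add: mv_def dt_def algebra_simps)
    finally show "(\<sigma> \<circ> \<sigma>) (\<psi> x) = id (\<psi> x)" by simp
  qed
  have \<sigma>\<iota>: "\<iota> \<circ> \<sigma> = \<sigma> \<circ> \<iota>"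
  proof (rule ext)
    fix x :: "complex \<times> complex" assume x: "x \<noteq> (0,0)"
    have "(\<iota> \<circ> \<sigma>) (\<psi> x) = \<psi> (mv 1 0 0 (-1) (mv 0 u s 0 x))" using x by (simp add: \<sigma>a \<iota>a mvnz[OF d2])
    also have "\<dots> = \<psi> (mv 0 u s 0 (mv 1 0 0 (-1) x))"
      using peq[OF mvnz[OF d1 mvnz[OF d2 x]] mvnz[OF d2 mvnz[OF d1 x]]] by (simp add: mv_def dt_def algebra_simps)
    also have "\<dots> = (\<sigma> \<circ> \<iota>) (\<psi> x)" using x by (simp add: \<sigma>a \<iota>a mvnz[OF d1])
    finally show "(\<iota> \<circ> \<sigma>) (\<psi> x) = (\<sigma> \<circ> \<iota>) (\<psi> x)" .
  qed
  have ff: "f (f (\<psi> x)) = \<psi> (g (g x))" if "x \<noteq> (0,0)" for x using that fe gnz by simp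
  have keyg: "dt (g (g y)) (g (g x)) = 0 \<longleftrightarrow>
    dt y x * dt y (mv 1 0 0 (-1) x) * dt y (mv 0 u s 0 x) * dt y (mv 0 u (-s) 0 x) = 0" for x y
    unfolding g_def using key[OF H det] .
  have inDeck: "\<rho> \<in> Deck (f \<circ> f)" if m: "is_mobius \<rho>" and n: "n1 * n4 - n2 * n3 \<noteq> 0"
    and act: "\<And>x. x \<noteq> (0,0) \<Longrightarrow> \<rho> (\<psi> x) = \<psi> (mv n1 n2 n3 n4 x)"
    and z: "\<And>x. dt (mv n1 n2 n3 n4 x) x * dt (mv n1 n2 n3 n4 x) (mv 1 0 0 (-1) x) * dt (mv n1 n2 n3 n4 x) (mv 0 u s 0 x) * dt (mv n1 n2 n3 n4 x) (mv 0 u (-s) 0 x) = 0"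
    for \<rho> n1 n2 n3 n4
  proof -
    have "(f \<circ> f) \<circ> \<rho> = f \<circ> f"
    proof (rule ext)
      fix x :: "complex \<times> complex" assume x: "x \<noteq> (0,0)"
      have nx: "mv n1 n2 n3 n4 x \<noteq> (0,0)" using mvnz[OF n x] .
      have "((f \<circ> f) \<circ> \<rho>) (\<psi> x) = \<psi> (g (g (mv n1 n2 n3 n4 x)))" using act[OF x] ff[OF nx] by simp
      also have "\<dots> = \<psi> (g (g x))" using peq[OF gnz[OF gnz[OF nx]] gnz[OF gnz[OF x]]] keyg z by blast
      finally show "((f \<circ> f) \<circ> \<rho>) (\<psi> x) = (f \<circ> f) (\<psi> x)" using ff[OF x] by simp
    qed
    then show ?thesis unfolding Deck_def using m by simp
  qed
  have id_in: "id \<in> Deck (f \<circ> f)" unfolding Deck_def using mob(4) e_id by simp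
  have \<iota>_in: "\<iota> \<in> Deck (f \<circ> f)"
    by (rule inDeck[OF mob(1) d1 \<iota>a]) (simp_all only: dt_self mult_zero_left mult_zero_right not_False_eq_True)
  have \<sigma>_in: "\<sigma> \<in> Deck (f \<circ> f)"
    by (rule inDeck[OF mob(2) d2 \<sigma>a]) (simp_all only: dt_self mult_zero_left mult_zero_right not_False_eq_True)
  have \<kappa>_in: "\<kappa> \<in> Deck (f \<circ> f)"
    by (rule inDeck[OF mob(3) d3 \<kappa>a]) (simp_all only: dt_self mult_zero_left mult_zero_right not_False_eq_True)
  have Deck_sub: "\<tau> \<in> {id, \<iota>, \<sigma>, \<kappa>}" if \<tau>: "\<tau> \<in> Deck (f \<circ> f)" for \<tau>
  proof -
    have m: "is_mobius \<tau>" and fix_ff: "(f \<circ> f) \<circ> \<tau> = f \<circ> f" using \<tau> unfolding Deck_def by auto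
    obtain n1 n2 n3 n4 where n: "n1 * n4 - n2 * n3 \<noteq> 0"
      and act: "\<forall>x. x \<noteq> (0,0) \<longrightarrow> \<tau> (\<psi> x) = \<psi> (mv n1 n2 n3 n4 x)"
      using mob_rep[OF D m] unfolding \<psi>_def by blast
    have prod0: "dt (mv n1 n2 n3 n4 x) x * dt (mv n1 n2 n3 n4 x) (mv 1 0 0 (-1) x) * dt (mv n1 n2 n3 n4 x) (mv 0 u s 0 x) * dt (mv n1 n2 n3 n4 x) (mv 0 u (-s) 0 x) = 0"
      if x: "x \<noteq> (0,0)" for x
    proof -
      have nx: "mv n1 n2 n3 n4 x \<noteq> (0,0)" using mvnz[OF n x] .
      have "\<psi> (g (g (mv n1 n2 n3 n4 x))) = \<psi> (g (g x))"
        using fun_cong[OF fix_ff, of "\<psi> x"] act x ff[OF nx] ff[OF x] by simp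
      then have "dt (g (g (mv n1 n2 n3 n4 x))) (g (g x)) = 0"
        using peq[OF gnz[OF gnz[OF nx]] gnz[OF gnz[OF x]]] by blast
      then show ?thesis using keyg by blast
    qed
    have "\<forall>x. x \<noteq> (0,0) \<longrightarrow> hq (-n3) (n1 - n4) n2 x * hq (-n3) (-(n1 + n4)) (-n2) x *
       hq (s*n1) (s*n2 - u*n3) (-(u*n4)) x * hq (-s*n1) (-s*n2 - u*n3) (-(u*n4)) x = 0"
    proof (intro allI impI)
      fix x :: "complex \<times> complex" assume x: "x \<noteq> (0,0)"
      from prod0[OF x] show "hq (-n3) (n1 - n4) n2 x * hq (-n3) (-(n1 + n4)) (-n2) x *
       hq (s*n1) (s*n2 - u*n3) (-(u*n4)) x * hq (-s*n1) (-s*n2 - u*n3) (-(u*n4)) x = 0"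
        by (simp only: qf_forms(1-3))
    qed
    from four_qf[OF this]
    have cases: "(\<forall>x. dt (mv n1 n2 n3 n4 x) x = 0) \<or> (\<forall>x. dt (mv n1 n2 n3 n4 x) (mv 1 0 0 (-1) x) = 0)
      \<or> (\<forall>x. dt (mv n1 n2 n3 n4 x) (mv 0 u s 0 x) = 0) \<or> (\<forall>x. dt (mv n1 n2 n3 n4 x) (mv 0 u (-s) 0 x) = 0)"
      unfolding qf_forms(1-3)
      using hq_zero'[of "-n3" "n1 - n4" n2] hq_zero'[of "-n3" "-(n1+n4)" "-n2"]
        hq_zero'[of "s*n1" "s*n2 - u*n3" "-(u*n4)"] hq_zero'[of "-s*n1" "-s*n2 - u*n3" "-(u*n4)"]
      by blast
    have conc: "\<tau> = \<rho>" if r: "\<And>x. x \<noteq> (0,0) \<Longrightarrow> \<rho> (\<psi> x) = \<psi> (mv m1 m2 m3 m4 x)"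
      and dm: "m1 * m4 - m2 * m3 \<noteq> 0" and z: "\<forall>x. dt (mv n1 n2 n3 n4 x) (mv m1 m2 m3 m4 x) = 0" for \<rho> m1 m2 m3 m4
    proof (rule ext)
      fix x :: "complex \<times> complex" assume x: "x \<noteq> (0,0)"
      have "\<tau> (\<psi> x) = \<psi> (mv n1 n2 n3 n4 x)" using act x by blast
      also have "\<dots> = \<psi> (mv m1 m2 m3 m4 x)" using peq[OF mvnz[OF n x] mvnz[OF dm x]] z by blast
      finally show "\<tau> (\<psi> x) = \<rho> (\<psi> x)" using r[OF x] by simp
    qed
    have r_id: "id (\<psi> x) = \<psi> (mv 1 0 0 1 x)" for x by (simp add: mv_def)
    have mv_id: "mv 1 0 0 1 x = x" for x by (simp add: mv_def)
    from cases show ?thesis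
    proof (elim disjE)
      assume "\<forall>x. dt (mv n1 n2 n3 n4 x) x = 0"
      then have "\<forall>x. dt (mv n1 n2 n3 n4 x) (mv 1 0 0 1 x) = 0" unfolding mv_id .
      then have "\<tau> = id" using conc[OF r_id d4] by blast
      then show ?thesis by simp
    next
      assume "\<forall>x. dt (mv n1 n2 n3 n4 x) (mv 1 0 0 (-1) x) = 0"
      then have "\<tau> = \<iota>" using conc[OF \<iota>a d1] by blast
      then show ?thesis by simp
    next
      assume "\<forall>x. dt (mv n1 n2 n3 n4 x) (mv 0 u s 0 x) = 0"
      then have "\<tau> = \<sigma>" using conc[OF \<sigma>a d2] by blast
      then show ?thesis by simp
    next
      assume "\<forall>x. dt (mv n1 n2 n3 n4 x) (mv 0 u (-s) 0 x) = 0"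
      then have "\<tau> = \<kappa>" using conc[OF \<kappa>a d3] by blast
      then show ?thesis by simp
    qed
  qed
  have Deck_eq: "Deck (f \<circ> f) = {id, \<iota>, \<sigma>, \<iota> \<circ> \<sigma>}"
    using Deck_sub id_in \<iota>_in \<sigma>_in \<kappa>_in unfolding \<iota>\<sigma> by blast
  have neq: "x \<noteq> (0,0) \<Longrightarrow> y \<noteq> (0,0) \<Longrightarrow> dt x y \<noteq> 0 \<Longrightarrow> \<psi> x \<noteq> \<psi> y" for x y
    using peq by blast
  have v1: "\<iota> (\<psi> (1,1)) = \<psi> (1,-1)" using \<iota>a[of "(1,1)"] by (simp add: mv_def)
  have v2: "\<iota> (\<psi> (1,0)) = \<psi> (1,0)" using \<iota>a[of "(1,0)"] by (simp add: mv_def)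
  have v3: "\<sigma> (\<psi> (1,0)) = \<psi> (0,s)" using \<sigma>a[of "(1,0)"] by (simp add: mv_def)
  have v4: "\<kappa> (\<psi> (1,0)) = \<psi> (0,-s)" using \<kappa>a[of "(1,0)"] by (simp add: mv_def)
  have v5: "\<sigma> (\<psi> (1,1)) = \<psi> (u,s)" using \<sigma>a[of "(1,1)"] by (simp add: mv_def)
  have v6: "\<kappa> (\<psi> (1,1)) = \<psi> (u,-s)" using \<kappa>a[of "(1,1)"] by (simp add: mv_def)
  have n1: "\<iota> \<noteq> id"
  proof
    assume "\<iota> = id" then have "\<psi> (1,-1) = \<psi> (1,1)" using v1 by simp
    moreover have "\<psi> (1,-1) \<noteq> \<psi> (1,1)" by (rule neq) (auto simp: dt_def)
    ultimately show False by simp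
  qed
  have n2: "\<sigma> \<noteq> id"
  proof
    assume "\<sigma> = id" then have "\<psi> (0,s) = \<psi> (1,0)" using v3 by simp
    moreover have "\<psi> (0,s) \<noteq> \<psi> (1,0)" by (rule neq) (auto simp: dt_def nzs)
    ultimately show False by simp
  qed
  have n3: "\<iota> \<circ> \<sigma> \<noteq> id"
  proof
    assume "\<iota> \<circ> \<sigma> = id" then have "\<psi> (0,-s) = \<psi> (1,0)" using v4 \<iota>\<sigma> by simp
    moreover have "\<psi> (0,-s) \<noteq> \<psi> (1,0)" by (rule neq) (auto simp: dt_def nzs)
    ultimately show False by simp
  qed
  have n4: "\<iota> \<noteq> \<sigma>"
  proof
    assume "\<iota> = \<sigma>" then have "\<psi> (1,0) = \<psi> (0,s)" using v2 v3 by simp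
    moreover have "\<psi> (1,0) \<noteq> \<psi> (0,s)" by (rule neq) (auto simp: dt_def nzs)
    ultimately show False by simp
  qed
  have n5: "\<iota> \<noteq> \<iota> \<circ> \<sigma>"
  proof
    assume "\<iota> = \<iota> \<circ> \<sigma>" then have "\<psi> (1,0) = \<psi> (0,-s)" using v2 v4 \<iota>\<sigma> by simp
    moreover have "\<psi> (1,0) \<noteq> \<psi> (0,-s)" by (rule neq) (auto simp: dt_def nzs)
    ultimately show False by simp
  qed
  have n6: "\<sigma> \<noteq> \<iota> \<circ> \<sigma>"
  proof
    assume "\<sigma> = \<iota> \<circ> \<sigma>" then have "\<psi> (u,s) = \<psi> (u,-s)" using v5 v6 \<iota>\<sigma> by simp
    moreover have "\<psi> (u,s) \<noteq> \<psi> (u,-s)" by (rule neq) (auto simp: dt_def nzs)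
    ultimately show False by simp
  qed
  have DG: "Deck_group (f \<circ> f) = \<lparr>carrier = {id, \<iota>, \<sigma>, \<iota> \<circ> \<sigma>}, mult = (\<circ>), one = id\<rparr>"
    unfolding Deck_group_def Deck_eq ..
  have grp: "group (Deck_group (f \<circ> f)) \<and> Deck_group (f \<circ> f) \<cong> V4"
    unfolding DG using klein_group[OF \<iota>\<iota> \<sigma>\<sigma> \<sigma>\<iota> n1 n2 n3 n4 n5 n6] by simp
  have sp: "special_pairs (Deck (f \<circ> f)) = {fixed_points \<iota>, fixed_points \<sigma>, fixed_points (\<iota> \<circ> \<sigma>)}"
    unfolding special_pairs_def Deck_eq using n1 n2 n3 by auto
  have surjp: "\<exists>x1 x2. (x1,x2) \<noteq> (0,0) \<and> p = \<psi> (x1,x2)" for p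
    using psi_surj[OF D, of p] unfolding \<psi>_def by auto
  have fp1: "fixed_points \<iota> = {c\<^sub>1, c\<^sub>2}"
  proof (rule Set.set_eqI)
    fix p obtain x1 x2 where x: "(x1,x2) \<noteq> (0,0)" and p: "p = \<psi> (x1,x2)" using surjp by blast
    have "p \<in> fixed_points \<iota> \<longleftrightarrow> \<psi> (x1,-x2) = \<psi> (x1,x2)"
      unfolding fixed_points_def p using \<iota>a[OF x] by (simp add: mv_def)
    also have "\<dots> \<longleftrightarrow> 2 * x1 * x2 = 0" using peq[of "(x1,-x2)" "(x1,x2)"] x by (auto simp: dt_def)
    also have "\<dots> \<longleftrightarrow> \<psi> (x1,x2) = \<psi> (1,0) \<or> \<psi> (x1,x2) = \<psi> (0,1)"
      using peq[of "(x1,x2)" "(1,0)"] peq[of "(x1,x2)" "(0,1)"] x by (auto simp: dt_def)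
    also have "\<dots> \<longleftrightarrow> p \<in> {c\<^sub>1, c\<^sub>2}" unfolding p c1 c2 by auto
    finally show "p \<in> fixed_points \<iota> \<longleftrightarrow> p \<in> {c\<^sub>1, c\<^sub>2}" .
  qed
  have fp2: "fixed_points \<sigma> = f -` {c\<^sub>1}"
  proof (rule Set.set_eqI)
    fix p obtain x1 x2 where x: "(x1,x2) \<noteq> (0,0)" and p: "p = \<psi> (x1,x2)" using surjp by blast
    have gx: "g (x1,x2) \<noteq> (0,0)" using gnz[OF x] .
    have "p \<in> fixed_points \<sigma> \<longleftrightarrow> \<psi> (u*x2, s*x1) = \<psi> (x1,x2)"
      unfolding fixed_points_def p using \<sigma>a[OF x] by (simp add: mv_def)
    also have "\<dots> \<longleftrightarrow> u * x2 * x2 - s * x1 * x1 = 0"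
      using peq[of "(u*x2, s*x1)" "(x1,x2)"] mvnz[OF d2 x] x by (auto simp: dt_def mv_def)
    also have "\<dots> \<longleftrightarrow> t * x1^2 + w * x2^2 = 0"
    proof -
      have "u * (t * x1^2 + w * x2^2) = w * (u * x2 * x2 - s * x1 * x1)"
        using H by algebra
      then show ?thesis using nzs by (metis mult_eq_0_iff)
    qed
    also have "\<dots> \<longleftrightarrow> \<psi> (g (x1,x2)) = \<psi> (1,0)"
    proof -
      have e: "dt (g (x1,x2)) (1,0) = -(t*x1^2 + w*x2^2)" by (simp add: dt_def g_def gq_def)
      have "(-(t*x1^2 + w*x2^2) = 0) \<longleftrightarrow> (t*x1^2 + w*x2^2 = 0)" by (rule neg_equal_0_iff_equal)
      then show ?thesis using peq[OF gx, of "(1,0)"] unfolding e by simp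
    qed
    also have "\<dots> \<longleftrightarrow> p \<in> f -` {c\<^sub>1}" unfolding p c1 using fe[OF x] by simp
    finally show "p \<in> fixed_points \<sigma> \<longleftrightarrow> p \<in> f -` {c\<^sub>1}" .
  qed
  have fp3: "fixed_points (\<iota> \<circ> \<sigma>) = f -` {c\<^sub>2}"
  proof (rule Set.set_eqI)
    fix p obtain x1 x2 where x: "(x1,x2) \<noteq> (0,0)" and p: "p = \<psi> (x1,x2)" using surjp by blast
    have gx: "g (x1,x2) \<noteq> (0,0)" using gnz[OF x] .
    have "p \<in> fixed_points (\<iota> \<circ> \<sigma>) \<longleftrightarrow> \<psi> (u*x2, -(s*x1)) = \<psi> (x1,x2)"
      unfolding fixed_points_def p \<iota>\<sigma> using \<kappa>a[OF x] by (simp add: mv_def)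
    also have "\<dots> \<longleftrightarrow> s * x1^2 + u * x2^2 = 0"
      using peq[of "(u*x2, -(s*x1))" "(x1,x2)"] mvnz[OF d3 x] x by (auto simp: dt_def mv_def power2_eq_square algebra_simps)
    also have "\<dots> \<longleftrightarrow> \<psi> (g (x1,x2)) = \<psi> (0,1)"
    proof -
      have e: "dt (g (x1,x2)) (0,1) = s*x1^2 + u*x2^2" by (simp add: dt_def g_def gq_def)
      show ?thesis using peq[OF gx, of "(0,1)"] unfolding e by simp
    qed
    also have "\<dots> \<longleftrightarrow> p \<in> f -` {c\<^sub>2}" unfolding p c2 using fe[OF x] by simp
    finally show "p \<in> fixed_points (\<iota> \<circ> \<sigma>) \<longleftrightarrow> p \<in> f -` {c\<^sub>2}" .
  qed
  show ?thesis using grp sp fp1 fp2 fp3 by simp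
qed

end
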